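(* For every partition $\lambda$ of $n$, the $\operatorname{GZ}_n$-module $1_\lambda=\operatorname{GZ}_n/I_\lambda$ is free of rank one as an $R$-module, generated by the image of $1$, and $L_i$ acts on it by multiplication by $r_\lambda(i)$.
   Context: $R$ is the localization of $\mathbb Z$ at a prime $(p)$. Jucys–Murphy elements $L_1=0$, $L_k=\sum_{j<k}(j,k)$; $\operatorname{GZ}_n$ is the $R$-subalgebra of $RS_n$ generated by $L_1,\dots,L_n$. Content $r_t(k)=j-i$ if $k$ is in node $[i,j]$ of the tableau $t$; $t^\lambda$ is the $\lambda$-tableau with $1,\dots,n$ entered in order along rows, $r_\lambda(i):=r_{t^\lambda}(i)$. $I_\lambda$ is the ideal of $\operatorname{GZ}_n$ generated by $L_i-r_\lambda(i)$, $i=1,\dots,n$. *)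

theory Defs
  imports "HOL-Combinatorics.Combinatorics" "HOL-Computational_Algebra.Primes" "HOL-Library.Function_Algebras"
begin

text \<open>R = Z localized at the prime ideal (p), as a subring of the rationals.\<close>
definition Zloc :: "int \<Rightarrow> rat set" where
  "Zloc p = {q. \<not> p dvd snd (quotient_of q)}"

definition Sym :: "nat \<Rightarrow> (nat \<Rightarrow> nat) set" where
  "Sym n = {\<sigma>. \<sigma> permutes {1..n}}"

text \<open>Elements of the group algebra (over Q, containing R S_n) are functions
  (nat \<Rightarrow> nat) \<Rightarrow> rat vanishing outside Sym n; basis element of sigma is
  the indicator of sigma; the product extends (sigma, tau) to sigma o tau.\<close>
definition galg :: "nat \<Rightarrow> ((nat \<Rightarrow> nat) \<Rightarrow> rat) set" where
  "galg n = {f. \<forall>\<sigma>. \<sigma> \<notin> Sym n \<longrightarrow> f \<sigma> = 0}"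

definition gbasis :: "nat \<Rightarrow> (nat \<Rightarrow> nat) \<Rightarrow> (nat \<Rightarrow> nat) \<Rightarrow> rat" where
  "gbasis n \<sigma> = (\<lambda>\<tau>. if \<tau> = \<sigma> \<and> \<sigma> \<in> Sym n then 1 else 0)"

definition gone :: "nat \<Rightarrow> (nat \<Rightarrow> nat) \<Rightarrow> rat" where
  "gone n = gbasis n id"

definition gmult :: "nat \<Rightarrow> ((nat \<Rightarrow> nat) \<Rightarrow> rat) \<Rightarrow> ((nat \<Rightarrow> nat) \<Rightarrow> rat) \<Rightarrow> (nat \<Rightarrow> nat) \<Rightarrow> rat" where
  "gmult n f g = (\<lambda>\<sigma>. if \<sigma> \<in> Sym n then (\<Sum>\<tau>\<in>Sym n. f \<tau> * g (inv \<tau> \<circ> \<sigma>)) else 0)"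

definition gsmult :: "rat \<Rightarrow> ((nat \<Rightarrow> nat) \<Rightarrow> rat) \<Rightarrow> (nat \<Rightarrow> nat) \<Rightarrow> rat" where
  "gsmult r f = (\<lambda>\<sigma>. r * f \<sigma>)"

definition JM :: "nat \<Rightarrow> nat \<Rightarrow> (nat \<Rightarrow> nat) \<Rightarrow> rat" where
  "JM n k = (\<lambda>\<sigma>. \<Sum>j\<in>{1..<k}. gbasis n (transpose j k) \<sigma>)"

inductive_set GZ :: "int \<Rightarrow> nat \<Rightarrow> ((nat \<Rightarrow> nat) \<Rightarrow> rat) set" for p n where
  scal: "r \<in> Zloc p \<Longrightarrow> gsmult r (gone n) \<in> GZ p n"
| gen: "1 \<le> k \<Longrightarrow> k \<le> n \<Longrightarrow> JM n k \<in> GZ p n"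
| add: "x \<in> GZ p n \<Longrightarrow> y \<in> GZ p n \<Longrightarrow> x + y \<in> GZ p n"
| mult: "x \<in> GZ p n \<Longrightarrow> y \<in> GZ p n \<Longrightarrow> gmult n x y \<in> GZ p n"
| smult: "r \<in> Zloc p \<Longrightarrow> x \<in> GZ p n \<Longrightarrow> gsmult r x \<in> GZ p n"

definition is_partition :: "nat \<Rightarrow> nat list \<Rightarrow> bool" where
  "is_partition n lam \<longleftrightarrow> sorted_wrt (\<ge>) lam \<and> 0 \<notin> set lam \<and> sum_list lam = n"

text \<open>Content of k in the row-reading tableau t^lambda: k lies in row i+1
  (i the least index with k \<le> lam_1+...+lam_(i+1)) and column
  k - (lam_1+...+lam_i); content = column - row.\<close>
definition row0 :: "nat list \<Rightarrow> nat \<Rightarrow> nat" where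
  "row0 lam k = (LEAST i. k \<le> sum_list (take (Suc i) lam))"

definition content :: "nat list \<Rightarrow> nat \<Rightarrow> int" where
  "content lam k = int (k - sum_list (take (row0 lam k) lam)) - int (Suc (row0 lam k))"

inductive_set Ilam :: "int \<Rightarrow> nat \<Rightarrow> nat list \<Rightarrow> ((nat \<Rightarrow> nat) \<Rightarrow> rat) set" for p n lam where
  zero: "0 \<in> Ilam p n lam"
| gen: "1 \<le> i \<Longrightarrow> i \<le> n \<Longrightarrow> JM n i - gsmult (of_int (content lam i)) (gone n) \<in> Ilam p n lam"
| add: "x \<in> Ilam p n lam \<Longrightarrow> y \<in> Ilam p n lam \<Longrightarrow> x + y \<in> Ilam p n lam"
| lmult: "a \<in> GZ p n \<Longrightarrow> x \<in> Ilam p n lam \<Longrightarrow> gmult n a x \<in> Ilam p n lam"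
| rmult: "a \<in> GZ p n \<Longrightarrow> x \<in> Ilam p n lam \<Longrightarrow> gmult n x a \<in> Ilam p n lam"

end

theory Submission imports Defs "HOL-Computational_Algebra.Polynomial" begin


hide_const (open) Polynomial.content

lemma normalize_snd_dvd:
  assumes "b > 0" shows "snd (Rat.normalize (a, b)) dvd b"
proof -
  have "snd (Rat.normalize (a,b)) = b div gcd a b" using assms by (simp add: Rat.normalize_def Let_def)
  moreover have "b div gcd a b dvd b" by (metis dvd_def dvd_div_mult_self gcd_dvd2 mult.commute)
  ultimately show ?thesis by simp
qed

lemma Zloc_add:
  assumes p: "prime p" and x: "x \<in> Zloc p" and y: "y \<in> Zloc p" shows "x + y \<in> Zloc p"
proof -
  obtain a c where ac: "quotient_of x = (a, c)" by (cases "quotient_of x")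
  obtain b d where bd: "quotient_of y = (b, d)" by (cases "quotient_of y")
  have c: "c > 0" "d > 0" using ac bd quotient_of_denom_pos by blast+
  have "snd (quotient_of (x + y)) dvd c * d"
    using normalize_snd_dvd[of "c*d" "a * d + b * c"] c by (simp add: rat_plus_code ac bd)
  moreover have "\<not> p dvd c" "\<not> p dvd d" using x y ac bd by (auto simp: Zloc_def)
  ultimately show ?thesis using p unfolding Zloc_def
    by (metis dvd_trans mem_Collect_eq prime_dvd_mult_iff)
qed

lemma Zloc_mult:
  assumes p: "prime p" and x: "x \<in> Zloc p" and y: "y \<in> Zloc p" shows "x * y \<in> Zloc p"
proof -
  obtain a c where ac: "quotient_of x = (a, c)" by (cases "quotient_of x")
  obtain b d where bd: "quotient_of y = (b, d)" by (cases "quotient_of y")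
  have c: "c > 0" "d > 0" using ac bd quotient_of_denom_pos by blast+
  have "snd (quotient_of (x * y)) dvd c * d"
    using normalize_snd_dvd[of "c*d" "a * b"] c by (simp add: rat_times_code ac bd)
  moreover have "\<not> p dvd c" "\<not> p dvd d" using x y ac bd by (auto simp: Zloc_def)
  ultimately show ?thesis using p unfolding Zloc_def
    by (metis dvd_trans mem_Collect_eq prime_dvd_mult_iff)
qed

lemma Zloc_int:
  assumes p: "prime p" shows "of_int i \<in> Zloc p"
  using prime_gt_1_int[OF p] by (simp add: Zloc_def quotient_of_int)


definition act :: "nat \<Rightarrow> ((nat \<Rightarrow> nat) \<Rightarrow> rat) \<Rightarrow> ((nat \<Rightarrow> rat) \<Rightarrow> rat) \<Rightarrow> (nat \<Rightarrow> rat) \<Rightarrow> rat" where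
  "act n f w = (\<lambda>x. \<Sum>\<sigma>\<in>Sym n. f \<sigma> * of_int (sign \<sigma>) * w (x \<circ> \<sigma>))"

lemma finite_Sym: "finite (Sym n)"
  unfolding Sym_def by (rule finite_permutations) simp

lemma Sym_perm: "\<sigma> \<in> Sym n \<Longrightarrow> permutation \<sigma>"
  unfolding Sym_def using finite_atLeastAtMost permutation_permutes by blast

lemma Sym_comp: "\<sigma> \<in> Sym n \<Longrightarrow> \<tau> \<in> Sym n \<Longrightarrow> \<sigma> \<circ> \<tau> \<in> Sym n"
  unfolding Sym_def by (simp add: permutes_compose)

lemma Sym_inv: "\<sigma> \<in> Sym n \<Longrightarrow> inv \<sigma> \<in> Sym n"
  unfolding Sym_def by (simp add: permutes_inv)

lemma Sym_id: "id \<in> Sym n"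
  unfolding Sym_def by simp

lemma act_gmult: "act n (gmult n f g) w = act n f (act n g w)"
proof
  fix x
  have "act n (gmult n f g) w x
      = (\<Sum>\<rho>\<in>Sym n. (\<Sum>\<tau>\<in>Sym n. f \<tau> * g (inv \<tau> \<circ> \<rho>)) * of_int (sign \<rho>) * w (x \<circ> \<rho>))"
    unfolding act_def gmult_def by (intro sum.cong) auto
  also have "\<dots> = (\<Sum>\<tau>\<in>Sym n. \<Sum>\<rho>\<in>Sym n. f \<tau> * (g (inv \<tau> \<circ> \<rho>) * of_int (sign \<rho>) * w (x \<circ> \<rho>)))"
    by (subst sum.swap) (simp add: sum_distrib_right mult.assoc)
  also have "\<dots> = (\<Sum>\<tau>\<in>Sym n. \<Sum>\<tau>'\<in>Sym n. f \<tau> * (g \<tau>' * of_int (sign (\<tau> \<circ> \<tau>')) * w (x \<circ> (\<tau> \<circ> \<tau>'))))"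
  proof (rule sum.cong[OF refl])
    fix \<tau> assume t: "\<tau> \<in> Sym n"
    have tp: "\<tau> permutes {1..n}" using t by (simp add: Sym_def)
    show "(\<Sum>\<rho>\<in>Sym n. f \<tau> * (g (inv \<tau> \<circ> \<rho>) * of_int (sign \<rho>) * w (x \<circ> \<rho>)))
        = (\<Sum>\<tau>'\<in>Sym n. f \<tau> * (g \<tau>' * of_int (sign (\<tau> \<circ> \<tau>')) * w (x \<circ> (\<tau> \<circ> \<tau>'))))"
    proof (rule sum.reindex_bij_witness[where j="\<lambda>\<rho>. inv \<tau> \<circ> \<rho>" and i="\<lambda>\<tau>'. \<tau> \<circ> \<tau>'"])
    qed (use Sym_comp Sym_inv t in \<open>auto simp: o_assoc permutes_inv_o[OF tp]\<close>)
  qed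
  also have "\<dots> = act n f (act n g w) x"
    unfolding act_def
    by (auto simp: sum_distrib_left sign_compose Sym_perm o_assoc intro!: sum.cong)
  finally show "act n (gmult n f g) w x = act n f (act n g w) x" .
qed

lemma act_basis: "\<tau> \<in> Sym n \<Longrightarrow> act n (gbasis n \<tau>) w x = of_int (sign \<tau>) * w (x \<circ> \<tau>)"
  unfolding act_def gbasis_def
  by (simp add: if_distrib if_distribR sum.If_cases finite_Sym cong: if_cong)

lemma act_one: "act n (gone n) w = w"
  by (rule ext) (simp add: gone_def act_basis Sym_id)

lemma act_add: "act n (f + g) w = (\<lambda>x. act n f w x + act n g w x)"
  unfolding act_def by (auto simp: algebra_simps sum.distrib)

lemma act_diff: "act n (f - g) w = (\<lambda>x. act n f w x - act n g w x)"
  unfolding act_def by (auto simp: algebra_simps sum_subtractf)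

lemma act_smult: "act n (gsmult r f) w = (\<lambda>x. r * act n f w x)"
  unfolding act_def gsmult_def by (auto simp: algebra_simps sum_distrib_left)

lemma act_zero: "act n 0 w = (\<lambda>x. 0)"
  unfolding act_def by auto

lemma act_scal_vec: "act n f (\<lambda>x. r * w x) = (\<lambda>x. r * act n f w x)"
  unfolding act_def by (auto simp: algebra_simps sum_distrib_left)

lemma act_zero_vec: "act n f (\<lambda>x. 0) = (\<lambda>x. 0)"
  unfolding act_def by auto

lemma act_JM:
  assumes "k \<le> n"
  shows "act n (JM n k) w x = - (\<Sum>j\<in>{1..<k}. w (x \<circ> transpose j k))"
proof -
  have "act n (JM n k) w x = (\<Sum>j\<in>{1..<k}. act n (gbasis n (transpose j k)) w x)"
    unfolding act_def JM_def by (simp add: sum_distrib_right sum.swap[of _ "Sym n"])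
  also have "\<dots> = (\<Sum>j\<in>{1..<k}. - w (x \<circ> transpose j k))"
  proof (intro sum.cong refl)
    fix j assume j: "j \<in> {1..<k}"
    then have "transpose j k \<in> Sym n" using assms unfolding Sym_def by (auto intro!: permutes_swap_id)
    then show "act n (gbasis n (transpose j k)) w x = - w (x \<circ> transpose j k)"
      using j by (simp add: act_basis sign_swap_id)
  qed
  finally show ?thesis by (simp add: sum_negf)
qed



abbreviation S :: "nat list \<Rightarrow> nat \<Rightarrow> nat" where "S lam i \<equiv> sum_list (take i lam)"

lemma S_mono: "i \<le> j \<Longrightarrow> S lam i \<le> S lam j"
proof -
  assume "i \<le> j"
  then have "take j lam = take i lam @ take (j - i) (drop i lam)"
    by (metis le_add_diff_inverse take_add)
  then show ?thesis by simp
qed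

lemma S_Suc: "s < length lam \<Longrightarrow> S lam (Suc s) = S lam s + lam ! s"
  by (simp add: take_Suc_conv_app_nth)

lemma S_len: "length lam \<le> i \<Longrightarrow> S lam i = sum_list lam"
  by simp

lemma row0_iff:
  assumes "1 \<le> m" "m \<le> sum_list lam"
  shows "row0 lam m = s \<longleftrightarrow> s < length lam \<and> S lam s < m \<and> m \<le> S lam (Suc s)"
proof
  assume r: "row0 lam m = s"
  have ex: "m \<le> S lam (Suc (length lam))" using assms by simp
  have le: "m \<le> S lam (Suc s)" using LeastI[of "\<lambda>i. m \<le> S lam (Suc i)", OF ex] r
    unfolding row0_def by simp
  have lt: "S lam s < m"
  proof (cases s)
    case 0 then show ?thesis using assms by simp
  next
    case (Suc s')
    have "\<not> m \<le> S lam (Suc s')" using not_less_Least[of s' "\<lambda>i. m \<le> S lam (Suc i)"] r Suc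
      unfolding row0_def by simp
    then show ?thesis using Suc by simp
  qed
  have "s < length lam"
  proof (rule ccontr)
    assume "\<not> s < length lam"
    then have "S lam s = sum_list lam" by simp
    then show False using lt assms by simp
  qed
  then show "s < length lam \<and> S lam s < m \<and> m \<le> S lam (Suc s)" using le lt by simp
next
  assume h: "s < length lam \<and> S lam s < m \<and> m \<le> S lam (Suc s)"
  show "row0 lam m = s" unfolding row0_def
  proof (rule Least_equality)
    show "m \<le> S lam (Suc s)" using h by simp
  next
    fix y assume y: "m \<le> S lam (Suc y)"
    show "s \<le> y"
    proof (rule ccontr)
      assume "\<not> s \<le> y"
      then have "S lam (Suc y) \<le> S lam s" by (intro S_mono) simp
      then show False using y h by simp
    qed
  qed
qed

lemma row0_props:
  assumes "1 \<le> m" "m \<le> sum_list lam"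
  shows "row0 lam m < length lam" "S lam (row0 lam m) < m" "m \<le> S lam (Suc (row0 lam m))"
  using row0_iff[OF assms, of "row0 lam m"] by auto

lemma row0_mono:
  assumes "1 \<le> a" "a \<le> b" "b \<le> sum_list lam"
  shows "row0 lam a \<le> row0 lam b"
proof (rule ccontr)
  assume "\<not> ?thesis"
  then have "Suc (row0 lam b) \<le> row0 lam a" by simp
  then have "S lam (Suc (row0 lam b)) \<le> S lam (row0 lam a)" by (rule S_mono)
  moreover have "b \<le> S lam (Suc (row0 lam b))" using row0_props(3)[of b lam] assms by simp
  moreover have "S lam (row0 lam a) < a" using row0_props(2)[of a lam] assms by simp
  ultimately show False using assms by simp
qed

definition Row :: "nat list \<Rightarrow> nat \<Rightarrow> nat set" where
  "Row lam s = {m. 1 \<le> m \<and> m \<le> sum_list lam \<and> row0 lam m = s}"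

lemma Row_eq: "s < length lam \<Longrightarrow> Row lam s = {S lam s + 1 .. S lam (Suc s)}"
proof -
  assume s: "s < length lam"
  have "S lam (Suc s) \<le> sum_list lam" using S_mono[of "Suc s" "length lam" lam] s by simp
  show ?thesis
  proof (intro set_eqI iffI)
    fix m assume "m \<in> Row lam s"
    then show "m \<in> {S lam s + 1 .. S lam (Suc s)}" unfolding Row_def using row0_iff[of m lam s] by auto
  next
    fix m assume m: "m \<in> {S lam s + 1 .. S lam (Suc s)}"
    then have "1 \<le> m" "m \<le> sum_list lam" using \<open>S lam (Suc s) \<le> sum_list lam\<close> by auto
    then show "m \<in> Row lam s" unfolding Row_def using row0_iff[of m lam s] s m by auto
  qed
qed

lemma card_Row: "s < length lam \<Longrightarrow> card (Row lam s) = lam ! s"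
  by (simp add: Row_eq S_Suc)



definition pdeg :: "nat \<Rightarrow> (rat \<Rightarrow> rat) \<Rightarrow> bool" where
  "pdeg d f \<longleftrightarrow> (\<exists>p. degree p \<le> d \<and> (\<forall>z. f z = poly p z))"

lemma pdeg_const: "pdeg d (\<lambda>z. c)"
  unfolding pdeg_def by (rule exI[of _ "[:c:]"]) simp

lemma pdeg_id: "pdeg 1 (\<lambda>z. z)"
  unfolding pdeg_def by (rule exI[of _ "[:0,1:]"]) simp

lemma pdeg_id': "pdeg (Suc 0) (\<lambda>z. z)"
  using pdeg_id by simp

lemma pdeg_mono: "pdeg d f \<Longrightarrow> d \<le> e \<Longrightarrow> pdeg e f"
  unfolding pdeg_def by (meson order_trans)

lemma pdeg_add: "pdeg d f \<Longrightarrow> pdeg d g \<Longrightarrow> pdeg d (\<lambda>z. f z + g z)"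
  unfolding pdeg_def
  by (metis (no_types, lifting) degree_add_le poly_add)

lemma pdeg_diff: "pdeg d f \<Longrightarrow> pdeg d g \<Longrightarrow> pdeg d (\<lambda>z. f z - g z)"
  unfolding pdeg_def
  by (metis (no_types, lifting) degree_diff_le poly_diff)

lemma pdeg_mult: "pdeg d f \<Longrightarrow> pdeg e g \<Longrightarrow> pdeg (d + e) (\<lambda>z. f z * g z)"
  unfolding pdeg_def
  by (metis (no_types, lifting) add_mono degree_mult_le order_trans poly_mult)

lemma pdeg_sum: "finite A \<Longrightarrow> (\<And>a. a \<in> A \<Longrightarrow> pdeg d (f a)) \<Longrightarrow> pdeg d (\<lambda>z. \<Sum>a\<in>A. f a z)"
proof (induction A rule: finite_induct)
  case empty then show ?case using pdeg_const[of d 0] by simp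
next
  case (insert a A) then show ?case using pdeg_add[of d "f a" "\<lambda>z. \<Sum>a\<in>A. f a z"] by simp
qed

lemma pdeg_prod: "finite A \<Longrightarrow> (\<And>a. a \<in> A \<Longrightarrow> pdeg (d a) (f a)) \<Longrightarrow> pdeg (\<Sum>a\<in>A. d a) (\<lambda>z. \<Prod>a\<in>A. f a z)"
proof (induction A rule: finite_induct)
  case empty then show ?case using pdeg_const[of 0 1] by simp
next
  case (insert a A) then show ?case using pdeg_mult[of "d a" "f a" "\<Sum>a\<in>A. d a" "\<lambda>z. \<Prod>a\<in>A. f a z"] by simp
qed

lemma pdeg_eq:
  assumes "pdeg d f" "pdeg d g" "finite A" "card A > d" "\<And>z. z \<in> A \<Longrightarrow> f z = g z"
  shows "f = g"
proof -
  obtain p q where p: "degree p \<le> d" "\<And>z. f z = poly p z" and q: "degree q \<le> d" "\<And>z. g z = poly q z"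
    using assms(1,2) unfolding pdeg_def by blast
  have "p = q"
    by (rule poly_eqI_degree[of A]) (use assms p q in auto)
  then show ?thesis using p q by auto
qed

definition W :: "(nat \<times> nat) set \<Rightarrow> (nat \<Rightarrow> rat) \<Rightarrow> rat" where
  "W J x = (\<Prod>(a,b)\<in>J. x a - x b)"

lemma W_cong: "(\<And>a b. (a,b) \<in> J \<Longrightarrow> y a = z a \<and> y b = z b) \<Longrightarrow> W J y = W J z"
  unfolding W_def by (intro prod.cong) auto

lemma W_pdeg:
  assumes "finite J"
  shows "pdeg (card {j\<in>J. fst j = m \<or> snd j = m}) (\<lambda>z. W J (x(m := z)))"
proof -
  have "pdeg (\<Sum>j\<in>J. if fst j = m \<or> snd j = m then 1 else 0) (\<lambda>z. \<Prod>j\<in>J. (x(m:=z)) (fst j) - (x(m:=z)) (snd j))"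
  proof (rule pdeg_prod[OF assms])
    fix j assume "j \<in> J"
    obtain a b where j: "j = (a,b)" by (cases j)
    show "pdeg (if fst j = m \<or> snd j = m then 1 else 0) (\<lambda>z. (x(m:=z)) (fst j) - (x(m:=z)) (snd j))"
    proof (cases "a = m")
      case True
      then show ?thesis using j
        by (cases "b = m") (auto intro!: pdeg_diff pdeg_id' pdeg_const pdeg_mono[OF pdeg_const])
    next
      case False
      then show ?thesis using j
        by (cases "b = m") (auto intro!: pdeg_diff pdeg_id' pdeg_const)
    qed
  qed
  moreover have "(\<Sum>j\<in>J. if fst j = m \<or> snd j = m then 1 else 0) = card {j\<in>J. fst j = m \<or> snd j = m}"
    using assms by (simp add: sum.If_cases Int_def case_prod_beta conj_commute)
  ultimately show ?thesis unfolding W_def by (simp add: case_prod_beta)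
qed



definition P :: "nat list \<Rightarrow> (nat \<times> nat) set" where
  "P lam = {(a,b). 1 \<le> a \<and> a < b \<and> b \<le> sum_list lam \<and> row0 lam a = row0 lam b}"

lemma finite_P: "finite (P lam)"
proof -
  have "P lam \<subseteq> {1..sum_list lam} \<times> {1..sum_list lam}" unfolding P_def by auto
  then show ?thesis by (rule finite_subset) simp
qed

definition V :: "nat list \<Rightarrow> (nat \<Rightarrow> rat) \<Rightarrow> rat" where
  "V lam x = W (P lam) x"

lemma V_adj:
  assumes a: "1 \<le> a" "Suc a \<le> sum_list lam" "row0 lam a = row0 lam (Suc a)"
  shows "V lam (x \<circ> transpose a (Suc a)) = - V lam x"
proof -
  define \<tau> where "\<tau> = transpose a (Suc a)"
  define P' where "P' = P lam - {(a, Suc a)}"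
  have ins: "P lam = insert (a, Suc a) P'" using a unfolding P'_def P_def by auto
  have fin: "finite P'" using finite_P unfolding P'_def by auto
  define h where "h = (\<lambda>(p::nat,q::nat). (\<tau> p, \<tau> q))"
  have row\<tau>: "row0 lam (\<tau> p) = row0 lam p" for p
    using a unfolding \<tau>_def by (auto simp: transpose_def)
  have hP: "h y \<in> P'" if "y \<in> P'" for y
  proof -
    obtain p q where y: "y = (p,q)" by (cases y)
    have pq: "1 \<le> p" "p < q" "q \<le> sum_list lam" "row0 lam p = row0 lam q" "(p,q) \<noteq> (a, Suc a)"
      using that y unfolding P'_def P_def by auto
    have "\<tau> p < \<tau> q" using pq unfolding \<tau>_def transpose_def by auto
    moreover have "1 \<le> \<tau> p" "\<tau> q \<le> sum_list lam" using pq a unfolding \<tau>_def transpose_def by auto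
    moreover have "(\<tau> p, \<tau> q) \<noteq> (a, Suc a)" using pq unfolding \<tau>_def transpose_def by auto
    ultimately show ?thesis using pq row\<tau>[of p] row\<tau>[of q] y unfolding h_def P'_def P_def by auto
  qed
  have hh: "h (h y) = y" for y unfolding h_def \<tau>_def by (cases y) auto
  have "(\<Prod>(p,q)\<in>P'. (x \<circ> \<tau>) p - (x \<circ> \<tau>) q) = (\<Prod>(p,q)\<in>P'. x p - x q)"
    by (rule prod.reindex_bij_witness[where i=h and j=h]) (use hP hh in \<open>auto simp: h_def\<close>)
  moreover have "(a, Suc a) \<notin> P'" unfolding P'_def by simp
  ultimately show ?thesis
    unfolding V_def W_def ins \<tau>_def[symmetric] using fin by (simp add: \<tau>_def) (simp add: algebra_simps)
qed



lemma transpose_conj: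
  assumes "m < k"
  shows "transpose m (Suc k) = transpose k (Suc k) \<circ> transpose m k \<circ> transpose k (Suc k)"
  using assms by (intro ext) (auto simp: transpose_def)

lemma V_swap:
  assumes "1 \<le> m" "m < k" "k \<le> sum_list lam" "row0 lam m = row0 lam k"
  shows "V lam (x \<circ> transpose m k) = - V lam x"
  using assms
proof (induction k arbitrary: x rule: less_induct)
  case (less k)
  obtain k' where k: "k = Suc k'" using less.prems by (cases k) auto
  show ?case
  proof (cases "m = k'")
    case True
    then show ?thesis using V_adj[of m lam x] less.prems k by (simp add: comp_def)
  next
    case False
    then have mk: "m < k'" using less.prems k by simp
    have r1: "row0 lam m \<le> row0 lam k'" using row0_mono[of m k' lam] less.prems k mk by simp
    have r2: "row0 lam k' \<le> row0 lam k" using row0_mono[of k' k lam] less.prems k mk by simp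
    have rk: "row0 lam k' = row0 lam (Suc k')" using r1 r2 less.prems k by simp
    have "x \<circ> transpose m k = ((x \<circ> transpose k' k) \<circ> transpose m k') \<circ> transpose k' (Suc k')"
      using transpose_conj[OF mk] k by (simp add: o_assoc)
    then have "V lam (x \<circ> transpose m k) = - V lam ((x \<circ> transpose k' k) \<circ> transpose m k')"
      using V_adj[of k' lam "(x \<circ> transpose k' k) \<circ> transpose m k'"] less.prems k rk mk by simp
    also have "\<dots> = V lam (x \<circ> transpose k' k)"
      using less.IH[of k' "x \<circ> transpose k' k"] less.prems k mk r1 r2 by (simp add: comp_def)
    also have "\<dots> = - V lam x"
      using V_adj[of k' lam x] less.prems k rk mk by simp
    finally show ?thesis .
  qed
qed

definition Pr :: "nat list \<Rightarrow> nat \<Rightarrow> (nat \<times> nat) set" where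
  "Pr lam s = {j \<in> P lam. row0 lam (fst j) = s}"

lemma W_union: "finite A \<Longrightarrow> finite B \<Longrightarrow> A \<inter> B = {} \<Longrightarrow> W (A \<union> B) y = W A y * W B y"
  unfolding W_def by (rule prod.union_disjoint)

lemma Pr_mem: "(a,b) \<in> Pr lam s \<Longrightarrow> a \<in> Row lam s \<and> b \<in> Row lam s \<and> a < b"
  unfolding Pr_def P_def Row_def by auto

lemma card_Pr_m:
  assumes "s < length lam" "m \<in> Row lam s"
  shows "card {j\<in>Pr lam s. fst j = m \<or> snd j = m} \<le> lam ! s - 1"
proof -
  define f where "f = (\<lambda>j::nat\<times>nat. if fst j = m then snd j else fst j)"
  have "card {j\<in>Pr lam s. fst j = m \<or> snd j = m} \<le> card (Row lam s - {m})"
  proof (rule card_inj_on_le[of f])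
    show "inj_on f {j\<in>Pr lam s. fst j = m \<or> snd j = m}"
      unfolding inj_on_def f_def
    proof (intro ballI impI)
      fix j j' assume j: "j \<in> {j\<in>Pr lam s. fst j = m \<or> snd j = m}" and j': "j' \<in> {j\<in>Pr lam s. fst j = m \<or> snd j = m}"
        and eq: "(if fst j = m then snd j else fst j) = (if fst j' = m then snd j' else fst j')"
      obtain a b where ab: "j = (a,b)" by (cases j)
      obtain a' b' where ab': "j' = (a',b')" by (cases j')
      have "a < b" "a' < b'" using j j' ab ab' Pr_mem by blast+
      then show "j = j'" using j j' ab ab' eq by (auto split: if_splits)
    qed
    show "f ` {j\<in>Pr lam s. fst j = m \<or> snd j = m} \<subseteq> Row lam s - {m}"
      unfolding f_def using Pr_mem by fastforce
    show "finite (Row lam s - {m})" using Row_eq[OF assms(1)] by simp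
  qed
  also have "\<dots> = lam ! s - 1" using card_Row[OF assms(1)] assms(2) Row_eq[OF assms(1)] by simp
  finally show ?thesis .
qed

lemma finite_Pr: "finite (Pr lam s)"
  unfolding Pr_def using finite_P by simp

lemma W_zero:
  assumes "m \<in> Row lam s" "q \<in> Row lam s" "m \<noteq> q"
  shows "W (Pr lam s) (x(m := x q)) = 0"
proof -
  have "(min m q, max m q) \<in> Pr lam s" using assms unfolding Pr_def P_def Row_def
    by (auto simp: min_def max_def)
  moreover have "(x(m := x q)) (min m q) - (x(m := x q)) (max m q) = 0"
    using assms(3) by (auto simp: min_def max_def)
  ultimately show ?thesis unfolding W_def using finite_Pr
    by (intro prod_zero) (auto intro!: bexI[of _ "(min m q, max m q)"])
qed

lemma key_identity:
  assumes sorted: "sorted_wrt (\<ge>) lam" and nz: "0 \<notin> set lam"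
    and r: "r' < r" "r < length lam" and k: "k \<in> Row lam r"
    and inj: "inj_on x (Row lam r')"
  shows "(\<Sum>m\<in>Row lam r'. W (Pr lam r') (x(m := x k)) * W (Pr lam r) (x(k := x m)))
         = W (Pr lam r') x * W (Pr lam r) x"
proof -
  define A where "A = Row lam r'"
  define l where "l = lam ! r'"
  have r'l: "r' < length lam" using r by simp
  have lpos: "l > 0" using nz r'l unfolding l_def by (metis gr0I nth_mem)
  have ll: "lam ! r \<le> l" using sorted r unfolding l_def by (simp add: sorted_wrt_iff_nth_less)
  have finA: "finite A" unfolding A_def using Row_eq[OF r'l] by simp
  have cardA: "card A = l" unfolding A_def l_def using card_Row[OF r'l] .
  define F where "F = (\<lambda>z. \<Sum>m\<in>A. W (Pr lam r') (x(m := z)) * W (Pr lam r) (x(k := x m)))"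
  define G where "G = (\<lambda>z. W (Pr lam r') x * W (Pr lam r) (x(k := z)))"
  have pF: "pdeg (l - 1) F" unfolding F_def
  proof (rule pdeg_sum[OF finA])
    fix m assume m: "m \<in> A"
    have "pdeg (card {j\<in>Pr lam r'. fst j = m \<or> snd j = m} + 0)
            (\<lambda>z. W (Pr lam r') (x(m := z)) * W (Pr lam r) (x(k := x m)))"
      by (rule pdeg_mult[OF W_pdeg[OF finite_Pr] pdeg_const])
    then show "pdeg (l - 1) (\<lambda>z. W (Pr lam r') (x(m := z)) * W (Pr lam r) (x(k := x m)))"
      using card_Pr_m[OF r'l, of m] m unfolding A_def l_def by (auto elim: pdeg_mono)
  qed
  have pG: "pdeg (l - 1) G" unfolding G_def
  proof -
    have "pdeg (0 + card {j\<in>Pr lam r. fst j = k \<or> snd j = k})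
            (\<lambda>z. W (Pr lam r') x * W (Pr lam r) (x(k := z)))"
      by (rule pdeg_mult[OF pdeg_const W_pdeg[OF finite_Pr]])
    then show "pdeg (l - 1) (\<lambda>z. W (Pr lam r') x * W (Pr lam r) (x(k := z)))"
      using card_Pr_m[OF r(2) k] ll by (auto elim: pdeg_mono)
  qed
  have agree: "F z = G z" if z: "z \<in> x ` A" for z
  proof -
    obtain q where q: "q \<in> A" "z = x q" using z by blast
    have "F z = (\<Sum>m\<in>A. if m = q then W (Pr lam r') x * W (Pr lam r) (x(k := x q)) else 0)"
      unfolding F_def
    proof (rule sum.cong[OF refl])
      fix m assume m: "m \<in> A"
      show "W (Pr lam r') (x(m := z)) * W (Pr lam r) (x(k := x m))
          = (if m = q then W (Pr lam r') x * W (Pr lam r) (x(k := x q)) else 0)"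
        using W_zero[of m lam r' q x] m q unfolding A_def by auto
    qed
    also have "\<dots> = G z" using q finA unfolding G_def by simp
    finally show ?thesis .
  qed
  have "F = G"
  proof (rule pdeg_eq[OF pF pG])
    show "finite (x ` A)" using finA by simp
    show "card (x ` A) > l - 1" using card_image[OF inj[folded A_def]] cardA lpos by simp
  qed (use agree in auto)
  then have "F (x k) = G (x k)" by simp
  then show ?thesis unfolding F_def G_def A_def by simp
qed



lemma garnir:
  assumes sorted: "sorted_wrt (\<ge>) lam" and nz: "0 \<notin> set lam"
    and r: "r' < r" "r < length lam" and k: "k \<in> Row lam r"
    and inj: "inj_on x {1..sum_list lam}"
  shows "(\<Sum>m\<in>Row lam r'. V lam (x \<circ> transpose m k)) = V lam x"
proof -
  define Q where "Q = {j\<in>P lam. row0 lam (fst j) \<noteq> r' \<and> row0 lam (fst j) \<noteq> r}"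
  have Pdec: "P lam = Pr lam r' \<union> (Pr lam r \<union> Q)" unfolding Q_def Pr_def by auto
  have finQ: "finite Q" unfolding Q_def using finite_P by simp
  have Vdec: "V lam y = W (Pr lam r') y * (W (Pr lam r) y * W Q y)" for y
  proof -
    have 1: "W (Pr lam r \<union> Q) y = W (Pr lam r) y * W Q y"
      by (rule W_union) (auto simp: finite_P Pr_def Q_def)
    have 2: "W (Pr lam r' \<union> (Pr lam r \<union> Q)) y = W (Pr lam r') y * W (Pr lam r \<union> Q) y"
      by (rule W_union) (use r in \<open>auto simp: finite_P Pr_def Q_def\<close>)
    show ?thesis unfolding V_def Pdec 2 1 ..
  qed
  have kR: "1 \<le> k" "k \<le> sum_list lam" "row0 lam k = r" using k unfolding Row_def by auto
  have inj': "inj_on x (Row lam r')" using inj by (rule inj_on_subset) (auto simp: Row_def)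
  have "(\<Sum>m\<in>Row lam r'. V lam (x \<circ> transpose m k))
      = (\<Sum>m\<in>Row lam r'. W (Pr lam r') (x(m := x k)) * W (Pr lam r) (x(k := x m))) * W Q x"
    unfolding sum_distrib_right
  proof (rule sum.cong[OF refl])
    fix m assume m: "m \<in> Row lam r'"
    have mR: "1 \<le> m" "m \<le> sum_list lam" "row0 lam m = r'" using m unfolding Row_def by auto
    have mk: "m \<noteq> k" using mR kR r by auto
    have e1: "W (Pr lam r') (x \<circ> transpose m k) = W (Pr lam r') (x(m := x k))"
      by (rule W_cong) (use Pr_mem kR r in \<open>fastforce simp: Row_def transpose_def\<close>)
    have e2: "W (Pr lam r) (x \<circ> transpose m k) = W (Pr lam r) (x(k := x m))"
      by (rule W_cong) (use Pr_mem mR r in \<open>fastforce simp: Row_def transpose_def\<close>)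
    have e3: "W Q (x \<circ> transpose m k) = W Q x"
    proof (rule W_cong)
      fix a b assume ab: "(a,b) \<in> Q"
      then have "row0 lam a \<noteq> r'" "row0 lam a \<noteq> r" "row0 lam b = row0 lam a"
        unfolding Q_def P_def by auto
      then have "a \<noteq> m" "a \<noteq> k" "b \<noteq> m" "b \<noteq> k" using mR kR by auto
      then show "(x \<circ> transpose m k) a = x a \<and> (x \<circ> transpose m k) b = x b" by simp
    qed
    show "V lam (x \<circ> transpose m k) = W (Pr lam r') (x(m := x k)) * W (Pr lam r) (x(k := x m)) * W Q x"
      using Vdec e1 e2 e3 by simp
  qed
  also have "\<dots> = W (Pr lam r') x * W (Pr lam r) x * W Q x"
    using key_identity[OF sorted nz r k inj'] by simp
  also have "\<dots> = V lam x" using Vdec by simp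
  finally show ?thesis .
qed



lemma JM_sum:
  assumes sorted: "sorted_wrt (\<ge>) lam" and nz: "0 \<notin> set lam"
    and k: "1 \<le> k" "k \<le> sum_list lam"
    and inj: "inj_on x {1..sum_list lam}"
  shows "(\<Sum>j\<in>{1..<k}. V lam (x \<circ> transpose j k))
       = (of_nat (row0 lam k) - of_nat (k - S lam (row0 lam k) - 1)) * V lam x"
proof -
  define r where "r = row0 lam k"
  have rp: "r < length lam" "S lam r < k" "k \<le> S lam (Suc r)" using row0_props[OF k] unfolding r_def by auto
  have SN: "S lam r \<le> sum_list lam" using rp k by simp
  have split: "{1..<k} = {S lam r + 1..<k} \<union> {1..S lam r}" using rp by auto
  have s1: "(\<Sum>j\<in>{S lam r + 1..<k}. V lam (x \<circ> transpose j k)) = - (of_nat (k - S lam r - 1) * V lam x)"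
  proof -
    have "(\<Sum>j\<in>{S lam r + 1..<k}. V lam (x \<circ> transpose j k)) = (\<Sum>j\<in>{S lam r + 1..<k}. - V lam x)"
    proof (rule sum.cong[OF refl])
      fix j assume j: "j \<in> {S lam r + 1..<k}"
      have "row0 lam j = r" using row0_iff[of j lam r] j rp k by auto
      then show "V lam (x \<circ> transpose j k) = - V lam x"
        using V_swap[of j k lam x] j k unfolding r_def by auto
    qed
    then show ?thesis by simp
  qed
  have U: "{1..S lam r} = (\<Union>r'\<in>{..<r}. Row lam r')"
  proof (intro set_eqI iffI)
    fix m assume m: "m \<in> {1..S lam r}"
    then have m1: "1 \<le> m" "m \<le> sum_list lam" using SN by auto
    have "S lam (row0 lam m) < m" using row0_props(2)[OF m1] .
    then have "row0 lam m < r" using m S_mono[of r "row0 lam m" lam] by (cases "row0 lam m < r") auto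
    then show "m \<in> (\<Union>r'\<in>{..<r}. Row lam r')" using m1 unfolding Row_def by auto
  next
    fix m assume "m \<in> (\<Union>r'\<in>{..<r}. Row lam r')"
    then obtain r' where r': "r' < r" "m \<in> Row lam r'" by auto
    then have "r' < length lam" using rp by simp
    then have "m \<le> S lam (Suc r')" using r' Row_eq by auto
    moreover have "S lam (Suc r') \<le> S lam r" using r' by (intro S_mono) simp
    ultimately show "m \<in> {1..S lam r}" using r' unfolding Row_def by auto
  qed
  have s2: "(\<Sum>j\<in>{1..S lam r}. V lam (x \<circ> transpose j k)) = of_nat r * V lam x"
  proof -
    have "(\<Sum>j\<in>{1..S lam r}. V lam (x \<circ> transpose j k))
        = (\<Sum>r'\<in>{..<r}. \<Sum>j\<in>Row lam r'. V lam (x \<circ> transpose j k))"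
      unfolding U
    proof (rule sum.UNION_disjoint)
      show "finite {..<r}" by simp
      show "\<forall>i\<in>{..<r}. finite (Row lam i)" using rp Row_eq by auto
      show "\<forall>i\<in>{..<r}. \<forall>j\<in>{..<r}. i \<noteq> j \<longrightarrow> Row lam i \<inter> Row lam j = {}"
        unfolding Row_def by auto
    qed
    also have "\<dots> = (\<Sum>r'\<in>{..<r}. V lam x)"
    proof (rule sum.cong[OF refl])
      fix r' assume "r' \<in> {..<r}"
      then show "(\<Sum>j\<in>Row lam r'. V lam (x \<circ> transpose j k)) = V lam x"
        using garnir[OF sorted nz _ rp(1) _ inj, of r' k] k unfolding Row_def r_def by auto
    qed
    finally show ?thesis by simp
  qed
  have "(\<Sum>j\<in>{1..<k}. V lam (x \<circ> transpose j k))
      = (\<Sum>j\<in>{S lam r + 1..<k}. V lam (x \<circ> transpose j k)) + (\<Sum>j\<in>{1..S lam r}. V lam (x \<circ> transpose j k))"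
    unfolding split by (rule sum.union_disjoint) auto
  also have "\<dots> = (of_nat r - of_nat (k - S lam r - 1)) * V lam x" using s1 s2 by (simp add: algebra_simps)
  finally show ?thesis unfolding r_def .
qed

definition vec :: "nat list \<Rightarrow> (nat \<Rightarrow> rat) \<Rightarrow> rat" where
  "vec lam x = (if inj_on x {1..sum_list lam} then V lam x else 0)"

lemma inj_comp_perm:
  assumes "\<sigma> permutes A" shows "inj_on (x \<circ> \<sigma>) A \<longleftrightarrow> inj_on x A"
proof -
  have "inj_on \<sigma> A" using assms by (meson permutes_inj inj_on_subset subset_UNIV)
  then have "inj_on x (\<sigma> ` A) \<longleftrightarrow> inj_on (x \<circ> \<sigma>) A" by (rule comp_inj_on_iff)
  then show ?thesis using permutes_image[OF assms] by simp
qed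

lemma vec_eigen:
  assumes sorted: "sorted_wrt (\<ge>) lam" and nz: "0 \<notin> set lam"
    and k: "1 \<le> k" "k \<le> sum_list lam"
  shows "act (sum_list lam) (JM (sum_list lam) k) (vec lam) = (\<lambda>x. of_int (content lam k) * vec lam x)"
proof
  fix x
  define N where "N = sum_list lam"
  have tp: "transpose j k permutes {1..N}" if "j \<in> {1..<k}" for j
    using that k unfolding N_def by (intro permutes_swap_id) auto
  have act: "act N (JM N k) (vec lam) x = - (\<Sum>j\<in>{1..<k}. vec lam (x \<circ> transpose j k))"
    using act_JM[of k N] k unfolding N_def by simp
  show "act (sum_list lam) (JM (sum_list lam) k) (vec lam) x = of_int (content lam k) * vec lam x"
  proof (cases "inj_on x {1..N}")
    case True
    have "(\<Sum>j\<in>{1..<k}. vec lam (x \<circ> transpose j k)) = (\<Sum>j\<in>{1..<k}. V lam (x \<circ> transpose j k))"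
      using True tp inj_comp_perm unfolding vec_def N_def by (intro sum.cong) auto
    also have "\<dots> = (of_nat (row0 lam k) - of_nat (k - S lam (row0 lam k) - 1)) * V lam x"
      using JM_sum[OF sorted nz k] True unfolding N_def by simp
    finally have e: "(\<Sum>j\<in>{1..<k}. vec lam (x \<circ> transpose j k)) = (of_nat (row0 lam k) - of_nat (k - S lam (row0 lam k) - 1)) * V lam x" .
    have "S lam (row0 lam k) < k" using row0_props(2)[OF k] .
    then have c: "content lam k = int (k - S lam (row0 lam k) - 1) - int (row0 lam k)"
      unfolding Defs.content_def by simp
    have c': "(of_int (content lam k) :: rat) = of_nat (k - S lam (row0 lam k) - 1) - of_nat (row0 lam k)"
      by (simp add: c)
    have vx: "vec lam x = V lam x" using True unfolding vec_def N_def by simp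
    have "act N (JM N k) (vec lam) x = - ((of_nat (row0 lam k) - of_nat (k - S lam (row0 lam k) - 1)) * V lam x)"
      using act e by simp
    also have "\<dots> = of_int (content lam k) * vec lam x" unfolding c' vx by (simp add: algebra_simps)
    finally show ?thesis unfolding N_def .
  next
    case False
    have "(\<Sum>j\<in>{1..<k}. vec lam (x \<circ> transpose j k)) = 0"
    proof (intro sum.neutral ballI)
      fix j assume j: "j \<in> {1..<k}"
      have "\<not> inj_on (x \<circ> transpose j k) {1..N}" using inj_comp_perm[OF tp[OF j], of x] False by blast
      then show "vec lam (x \<circ> transpose j k) = 0" unfolding vec_def N_def by simp
    qed
    then show ?thesis using act False unfolding vec_def N_def[symmetric] by simp
  qed
qed

lemma vec_nonzero: "vec lam (\<lambda>a. of_nat a) \<noteq> 0"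
proof -
  have "inj_on (\<lambda>a. of_nat a :: rat) {1..sum_list lam}" by (auto simp: inj_on_def)
  moreover have "V lam (\<lambda>a. of_nat a) \<noteq> 0"
    unfolding V_def W_def using finite_P by (auto simp: prod_zero_iff P_def)
  ultimately show ?thesis unfolding vec_def by simp
qed



lemma gbasis_galg: "gbasis n \<sigma> \<in> galg n" unfolding galg_def gbasis_def by auto
lemma gone_galg: "gone n \<in> galg n" unfolding gone_def by (rule gbasis_galg)
lemma gsmult_galg: "f \<in> galg n \<Longrightarrow> gsmult r f \<in> galg n" unfolding galg_def gsmult_def by auto
lemma add_galg: "f \<in> galg n \<Longrightarrow> g \<in> galg n \<Longrightarrow> f + g \<in> galg n" unfolding galg_def by auto
lemma diff_galg: "f \<in> galg n \<Longrightarrow> g \<in> galg n \<Longrightarrow> f - g \<in> galg n" unfolding galg_def by auto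
lemma gmult_galg: "gmult n f g \<in> galg n" unfolding galg_def gmult_def by auto
lemma JM_galg: "JM n k \<in> galg n" unfolding galg_def JM_def gbasis_def by (auto intro!: sum.neutral)
lemma zero_galg: "0 \<in> galg n" unfolding galg_def by simp

lemma GZ_galg: "x \<in> GZ p n \<Longrightarrow> x \<in> galg n"
  by (induction rule: GZ.induct) (blast intro: gsmult_galg gone_galg JM_galg add_galg gmult_galg)+

lemma Ilam_galg: "x \<in> Ilam p n lam \<Longrightarrow> x \<in> galg n"
  by (induction rule: Ilam.induct)
     (blast intro: zero_galg gsmult_galg gone_galg JM_galg add_galg gmult_galg diff_galg)+

lemma gmult_one: "y \<in> galg n \<Longrightarrow> gmult n (gone n) y = y"
proof
  fix \<sigma> assume y: "y \<in> galg n"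
  show "gmult n (gone n) y \<sigma> = y \<sigma>"
  proof (cases "\<sigma> \<in> Sym n")
    case True
    have "gmult n (gone n) y \<sigma> = (\<Sum>\<tau>\<in>Sym n. (if \<tau> = id then y (inv \<tau> \<circ> \<sigma>) else 0))"
      using True unfolding gmult_def gone_def gbasis_def using Sym_id by (auto intro!: sum.cong)
    also have "\<dots> = y \<sigma>" using Sym_id finite_Sym by simp
    finally show ?thesis .
  next
    case False then show ?thesis using y unfolding gmult_def galg_def by auto
  qed
qed

lemma gmult_diff_left: "gmult n (f - g) y = gmult n f y - gmult n g y"
  unfolding gmult_def by (auto simp: algebra_simps sum_subtractf fun_eq_iff)

lemma gmult_smult_left: "gmult n (gsmult r f) y = gsmult r (gmult n f y)"
  unfolding gmult_def gsmult_def by (auto simp: algebra_simps sum_distrib_left fun_eq_iff)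

lemma Ilam_smult:
  assumes "r \<in> Zloc p" "z \<in> Ilam p n lam" shows "gsmult r z \<in> Ilam p n lam"
proof -
  have "gmult n (gsmult r (gone n)) z \<in> Ilam p n lam" using assms by (intro Ilam.lmult GZ.scal)
  then show ?thesis using gmult_one[OF Ilam_galg[OF assms(2)]] by (simp add: gmult_smult_left)
qed

lemma existence:
  assumes p: "prime p" and x: "x \<in> GZ p n"
  shows "\<exists>r. r \<in> Zloc p \<and> x - gsmult r (gone n) \<in> Ilam p n lam"
  using x
proof (induction rule: GZ.induct)
  case (scal r)
  then show ?case using Ilam.zero by (metis diff_self)
next
  case (gen k)
  then show ?case using Ilam.gen Zloc_int[OF p] by blast
next
  case (add x y)
  then obtain r s where r: "r \<in> Zloc p" "x - gsmult r (gone n) \<in> Ilam p n lam"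
    and s: "s \<in> Zloc p" "y - gsmult s (gone n) \<in> Ilam p n lam" by blast
  have "x + y - gsmult (r + s) (gone n) = (x - gsmult r (gone n)) + (y - gsmult s (gone n))"
    by (auto simp: gsmult_def fun_eq_iff algebra_simps)
  then show ?case using Ilam.add[OF r(2) s(2)] Zloc_add[OF p r(1) s(1)] by metis
next
  case (mult x y)
  then obtain r s where r: "r \<in> Zloc p" "x - gsmult r (gone n) \<in> Ilam p n lam"
    and s: "s \<in> Zloc p" "y - gsmult s (gone n) \<in> Ilam p n lam" by blast
  have yg: "y \<in> galg n" using GZ_galg[OF mult.hyps(2)] .
  have "gmult n (x - gsmult r (gone n)) y + gsmult r (y - gsmult s (gone n))
      = gmult n x y - gsmult r (gmult n (gone n) y) + gsmult r (y - gsmult s (gone n))"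
    by (simp add: gmult_diff_left gmult_smult_left)
  also have "\<dots> = gmult n x y - gsmult (r * s) (gone n)"
    unfolding gmult_one[OF yg] by (auto simp: gsmult_def fun_eq_iff algebra_simps)
  finally have eq: "gmult n x y - gsmult (r * s) (gone n) = gmult n (x - gsmult r (gone n)) y + gsmult r (y - gsmult s (gone n))" ..
  have "gmult n (x - gsmult r (gone n)) y \<in> Ilam p n lam" using Ilam.rmult[OF mult.hyps(2) r(2)] .
  moreover have "gsmult r (y - gsmult s (gone n)) \<in> Ilam p n lam" using Ilam_smult[OF r(1) s(2)] .
  ultimately show ?case using eq Ilam.add Zloc_mult[OF p r(1) s(1)] by metis
next
  case (smult r x)
  then obtain s where s: "s \<in> Zloc p" "x - gsmult s (gone n) \<in> Ilam p n lam" by blast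
  have "gsmult r x - gsmult (r * s) (gone n) = gsmult r (x - gsmult s (gone n))"
    by (auto simp: gsmult_def fun_eq_iff algebra_simps)
  then show ?case using Ilam_smult[OF smult.hyps(1) s(2)] Zloc_mult[OF p smult.hyps(1) s(1)] by metis
qed

lemma GZ_scalar:
  assumes eig: "\<And>k. 1 \<le> k \<Longrightarrow> k \<le> n \<Longrightarrow> \<exists>c. act n (JM n k) w = (\<lambda>x. c * w x)"
    and a: "a \<in> GZ p n"
  shows "\<exists>q. act n a w = (\<lambda>x. q * w x)"
  using a
proof (induction rule: GZ.induct)
  case (scal r)
  then show ?case by (auto simp: act_smult act_one)
next
  case (gen k)
  then show ?case using eig by blast
next
  case (add x y)
  then obtain q1 q2 where "act n x w = (\<lambda>x. q1 * w x)" "act n y w = (\<lambda>x. q2 * w x)" by blast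
  then show ?case unfolding act_add by (auto simp: algebra_simps intro!: exI[of _ "q1 + q2"])
next
  case (mult x y)
  then obtain q1 q2 where "act n x w = (\<lambda>x. q1 * w x)" "act n y w = (\<lambda>x. q2 * w x)" by blast
  then show ?case by (auto simp: act_gmult act_scal_vec intro!: exI[of _ "q2 * q1"])
next
  case (smult r x)
  then obtain q1 where "act n x w = (\<lambda>x. q1 * w x)" by blast
  then show ?case by (auto simp: act_smult intro!: exI[of _ "r * q1"])
qed

lemma Ilam_kill:
  assumes eig: "\<And>k. 1 \<le> k \<Longrightarrow> k \<le> n \<Longrightarrow> act n (JM n k) w = (\<lambda>x. of_int (content lam k) * w x)"
    and z: "z \<in> Ilam p n lam"
  shows "act n z w = (\<lambda>x. 0)"
  using z
proof (induction rule: Ilam.induct)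
  case zero
  then show ?case by (simp add: act_def)
next
  case (gen i)
  then show ?case unfolding act_diff act_smult act_one using eig[of i] by simp
next
  case (add x y)
  then show ?case unfolding act_add by simp
next
  case (lmult a x)
  then show ?case by (simp add: act_gmult act_zero_vec)
next
  case (rmult a x)
  obtain q where "act n a w = (\<lambda>x. q * w x)"
    using GZ_scalar[OF _ rmult.hyps(1), of w] eig by blast
  then show ?case using rmult.IH by (simp add: act_gmult act_scal_vec)
qed

theorem mainTheorem12:
  fixes p :: int and n :: nat and lam :: "nat list"
  assumes "prime p" and "is_partition n lam"
  shows "(\<forall>x\<in>GZ p n. \<exists>!r. r \<in> Zloc p \<and> x - gsmult r (gone n) \<in> Ilam p n lam)
       \<and> (\<forall>i\<in>{1..n}. \<forall>x\<in>GZ p n.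
            gmult n (JM n i) x - gsmult (of_int (content lam i)) x \<in> Ilam p n lam)"
proof
  have sorted: "sorted_wrt (\<ge>) lam" and nz: "0 \<notin> set lam" and N: "sum_list lam = n"
    using assms(2) unfolding is_partition_def by auto
  have eig: "act n (JM n k) (vec lam) = (\<lambda>x. of_int (content lam k) * vec lam x)" if "1 \<le> k" "k \<le> n" for k
    using vec_eigen[OF sorted nz, of k] that N by simp
  show "\<forall>x\<in>GZ p n. \<exists>!r. r \<in> Zloc p \<and> x - gsmult r (gone n) \<in> Ilam p n lam"
  proof
    fix x assume x: "x \<in> GZ p n"
    obtain r where r: "r \<in> Zloc p" "x - gsmult r (gone n) \<in> Ilam p n lam"
      using existence[OF assms(1) x] by blast
    have val: "act n x (vec lam) = (\<lambda>y. r' * vec lam y)"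
      if "x - gsmult r' (gone n) \<in> Ilam p n lam" for r'
    proof -
      have "act n (x - gsmult r' (gone n)) (vec lam) = (\<lambda>y. 0)" by (rule Ilam_kill[OF eig that])
      then show ?thesis unfolding act_diff act_smult act_one by (auto simp: fun_eq_iff)
    qed
    show "\<exists>!r. r \<in> Zloc p \<and> x - gsmult r (gone n) \<in> Ilam p n lam"
    proof (rule ex1I[of _ r])
      show "r \<in> Zloc p \<and> x - gsmult r (gone n) \<in> Ilam p n lam" using r by simp
    next
      fix r' assume "r' \<in> Zloc p \<and> x - gsmult r' (gone n) \<in> Ilam p n lam"
      then have "(\<lambda>y. r' * vec lam y) = (\<lambda>y. r * vec lam y)" using val r(2) by metis
      then have "r' * vec lam (\<lambda>a. of_nat a) = r * vec lam (\<lambda>a. of_nat a)" by metis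
      then show "r' = r" using vec_nonzero[of lam] by simp
    qed
  qed
next
  show "\<forall>i\<in>{1..n}. \<forall>x\<in>GZ p n. gmult n (JM n i) x - gsmult (of_int (content lam i)) x \<in> Ilam p n lam"
  proof (intro ballI)
    fix i x assume i: "i \<in> {1..n}" and x: "x \<in> GZ p n"
    have "gmult n (JM n i - gsmult (of_int (content lam i)) (gone n)) x \<in> Ilam p n lam"
      using i by (intro Ilam.rmult[OF x] Ilam.gen) auto
    then show "gmult n (JM n i) x - gsmult (of_int (content lam i)) x \<in> Ilam p n lam"
      by (simp add: gmult_diff_left gmult_smult_left gmult_one[OF GZ_galg[OF x]])
  qed
qed

end
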